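(* In the setting described in the context, the Dirichlet problem has at most one regular solution: if $u_1,u_2$ are functions that are regular solutions of $\sum_{i=1}^m u_{x_ix_i}+\sum_{k=1}^n\frac{2\alpha_k}{x_k}u_{x_k}=0$ in $\Omega$, continuous on $\overline\Omega$, and both satisfy $u|_\Gamma=\varphi$ on $\overline\Gamma$ and $u|_{x_k=0}=\tau_k(\tilde x_k)$ on $\overline\Gamma_k$ for all $k\in K$, then $u_1=u_2$ on $\overline\Omega$.
   Context: Let $m>2$ and $1\le n\le m$ be integers, $K=\{1,\dots,n\}$, $\alpha=(\alpha_1,\dots,\alpha_n)$ real with $0<2\alpha_k<1$, $\mathbb R_m^{n+}=\{x\in\mathbb R^m:x_1>0,\dots,x_n>0\}$. A regular solution of the equation in a domain is a function with continuous derivatives up to second order there satisfying the equation at every point. $\Gamma$ is a surface in $\mathbb R_m^{n+}$ which together with the hyperplanes $x_1=0,\dots,x_n=0$ bounds a finite domain $\Omega\subset\mathbb R_m^{n+}$; $\Gamma_k$ is the part of $\partial\Omega$ on the hyperplane $x_k=0$. $\Gamma$ is a Lyapunov surface: (i) definite normal at every point; (ii) constants $a,\kappa>0$ with angle between normals at $x,\xi\in\Gamma$ at most $a|x-\xi|^\kappa$; (iii) $\Gamma$ meets the hyperplanes $x_k=0$ at right angles. For $x\in\mathbb R^m$, $\tilde x_k=(x_1,\dots,x_{k-1},x_{k+1},\dots,x_m)$. The data $\varphi\in C(\overline\Gamma)$ and $\tau_k\in C(\overline\Gamma_k)$ are given continuous functions satisfying the matching conditions $\varphi=\tau_k$ on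 $\overline\Gamma\cap\overline\Gamma_k$, $k\in K$. *)

theory Defs
  imports "HOL-Analysis.Analysis"
begin

text \<open>Points of R^m are vectors of type real^'m; the index set K of the
  distinguished coordinates x_1..x_n is a subset of the coordinate type.\<close>

definition unit_vec :: "'m::finite \<Rightarrow> real^'m" where
  "unit_vec i = axis i 1"

definition pd :: "'m::finite \<Rightarrow> (real^'m \<Rightarrow> real) \<Rightarrow> real^'m \<Rightarrow> real" where
  "pd i u x = deriv (\<lambda>t. u (x + t *\<^sub>R unit_vec i)) 0"

definition has_pd :: "'m::finite \<Rightarrow> (real^'m \<Rightarrow> real) \<Rightarrow> real^'m \<Rightarrow> bool" where
  "has_pd i u x \<longleftrightarrow> (\<lambda>t. u (x + t *\<^sub>R unit_vec i)) field_differentiable (at 0)"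

definition C2_on :: "(real^'m::finite \<Rightarrow> real) \<Rightarrow> (real^'m) set \<Rightarrow> bool" where
  "C2_on u S \<longleftrightarrow>
     continuous_on S u \<and>
     (\<forall>i. \<forall>x\<in>S. has_pd i u x) \<and>
     (\<forall>i j. \<forall>x\<in>S. has_pd j (pd i u) x) \<and>
     (\<forall>i. continuous_on S (pd i u)) \<and>
     (\<forall>i j. continuous_on S (pd j (pd i u)))"

definition orthant :: "'m::finite set \<Rightarrow> (real^'m) set" where
  "orthant K = {x. \<forall>k\<in>K. x $ k > 0}"

definition regular_solution ::
  "'m::finite set \<Rightarrow> ('m \<Rightarrow> real) \<Rightarrow> (real^'m) set \<Rightarrow> (real^'m \<Rightarrow> real) \<Rightarrow> bool" where
  "regular_solution K \<alpha> \<Omega> u \<longleftrightarrow>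
     C2_on u \<Omega> \<and>
     (\<forall>x\<in>\<Omega>. (\<Sum>i\<in>UNIV. pd i (pd i u) x) + (\<Sum>k\<in>K. (2 * \<alpha> k / x $ k) * pd k u x) = 0)"

text \<open>Lyapunov surface conditions (i)-(iii) for \<Gamma>, with the unit normal field \<nu>
  given on the closure of \<Gamma>.  (i) \<nu> x is a unit vector normal to the tangent
  hyperplane of \<Gamma> at x; (ii) the angle between normals is Hoelder; (iii) at points
  of the closure on x_k = 0 the normal is orthogonal to e_k (right angle).\<close>
definition lyapunov_surface :: "'m::finite set \<Rightarrow> (real^'m) set \<Rightarrow> bool" where
  "lyapunov_surface K \<Gamma> \<longleftrightarrow>
     (\<exists>\<nu> :: real^'m \<Rightarrow> real^'m. \<exists>a \<kappa> :: real. a > 0 \<and> \<kappa> > 0 \<and>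
        (\<forall>x\<in>closure \<Gamma>. norm (\<nu> x) = 1 \<and>
           (\<forall>\<epsilon>>0. \<exists>\<delta>>0. \<forall>y\<in>closure \<Gamma>. dist y x < \<delta> \<longrightarrow>
               \<bar>\<nu> x \<bullet> (y - x)\<bar> \<le> \<epsilon> * dist y x)) \<and>
        (\<forall>x\<in>closure \<Gamma>. \<forall>\<xi>\<in>closure \<Gamma>. arccos (\<nu> x \<bullet> \<nu> \<xi>) \<le> a * dist x \<xi> powr \<kappa>) \<and>
        (\<forall>k\<in>K. \<forall>x\<in>closure \<Gamma>. x $ k = 0 \<longrightarrow> \<nu> x $ k = 0))"

end

theory Submission
  imports Defs
begin
lemma max2:
  fixes G G' :: "real \<Rightarrow> real"
  assumes d: "d > 0"
    and der: "\<And>s. \<bar>s\<bar> < d \<Longrightarrow> (G has_real_derivative G' s) (at s)"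
    and der2: "(G' has_real_derivative c) (at 0)"
    and mx: "\<And>s. \<bar>s\<bar> < d \<Longrightarrow> G s \<le> G 0"
  shows "G' 0 = 0 \<and> c \<le> 0"
proof -
  have g0: "G' 0 = 0"
    using DERIV_local_max[OF der[of 0] d] mx d by auto
  moreover have "c \<le> 0"
  proof (rule ccontr)
    assume "\<not> c \<le> 0"
    then obtain e where e: "e > 0" "\<And>h. h > 0 \<Longrightarrow> h < e \<Longrightarrow> G' 0 < G' (0 + h)"
      using DERIV_pos_inc_right[OF der2] by force
    define s where "s = min d e / 2"
    have s: "0 < s" "s < d" "s < e" using d e by (auto simp: s_def)
    obtain z where z: "0 < z" "z < s" "G s - G 0 = (s - 0) * G' z"
      using MVT2[of 0 s G G'] s der by force
    have "G' z > 0" using e(2)[of z] z s g0 by simp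
    hence "G s - G 0 > 0" using z s by simp
    with mx[of s] s show False by simp
  qed
  ultimately show ?thesis by simp
qed

lemma pd_deriv:
  assumes "has_pd i u y"
  shows "((\<lambda>t. u (y + t *\<^sub>R unit_vec i)) has_real_derivative pd i u y) (at 0)"
  using assms unfolding has_pd_def pd_def
  using DERIV_deriv_iff_field_differentiable by blast

lemma pd_deriv_shift:
  assumes "has_pd i u (x + s *\<^sub>R unit_vec i)"
  shows "((\<lambda>t. u (x + t *\<^sub>R unit_vec i)) has_real_derivative pd i u (x + s *\<^sub>R unit_vec i)) (at s)"
proof -
  have "((\<lambda>t. u (x + (t + s) *\<^sub>R unit_vec i)) has_real_derivative pd i u (x + s *\<^sub>R unit_vec i)) (at 0)"
    using pd_deriv[OF assms] by (simp add: scaleR_add_left algebra_simps)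
  thus ?thesis using DERIV_shift[of "\<lambda>t. u (x + t *\<^sub>R unit_vec i)" _ 0 s] by simp
qed

lemma unit_vec_nth: "unit_vec i $ j = (if j = i then 1 else 0)"
  by (simp add: unit_vec_def axis_def)

lemma norm_unit_vec: "norm (unit_vec i) = 1"
  by (simp add: unit_vec_def)

lemma no_int_max:
  fixes u1 u2 :: "real^'m::finite \<Rightarrow> real"
  assumes op: "open \<Omega>" and orth: "\<Omega> \<subseteq> orthant K" and al: "\<forall>k\<in>K. \<alpha> k > 0"
    and s1: "regular_solution K \<alpha> \<Omega> u1" and s2: "regular_solution K \<alpha> \<Omega> u2"
    and ep: "\<epsilon> > 0" and x: "x \<in> \<Omega>"
    and mx: "\<forall>y\<in>\<Omega>. u1 y - u2 y + \<epsilon> * (y$j)^2 \<le> u1 x - u2 x + \<epsilon> * (x$j)^2"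
  shows False
proof -
  obtain r where r: "r > 0" "ball x r \<subseteq> \<Omega>" using op x open_contains_ball by blast
  have line: "x + s *\<^sub>R unit_vec i \<in> \<Omega>" if "\<bar>s\<bar> < r" for s i
    using r that by (auto simp: dist_norm norm_unit_vec intro!: subsetD[OF r(2)])
  have C1: "C2_on u1 \<Omega>" and C2: "C2_on u2 \<Omega>" using s1 s2 by (auto simp: regular_solution_def)
  define c where "c i = pd i (pd i u1) x - pd i (pd i u2) x + \<epsilon> * 2 * (unit_vec i $ j) * (unit_vec i $ j)" for i
  have comp: "(x + s *\<^sub>R unit_vec i) $ j = x $ j + s * unit_vec i $ j" for s i by simp
  have key: "pd i u1 x - pd i u2 x + \<epsilon> * 2 * (x$j) * (unit_vec i $ j) = 0 \<and> c i \<le> 0" for i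
  proof -
    define G where "G s = u1 (x + s *\<^sub>R unit_vec i) - u2 (x + s *\<^sub>R unit_vec i) + \<epsilon> * ((x + s *\<^sub>R unit_vec i)$j)^2" for s
    define G' where "G' s = pd i u1 (x + s *\<^sub>R unit_vec i) - pd i u2 (x + s *\<^sub>R unit_vec i) + \<epsilon> * 2 * ((x + s *\<^sub>R unit_vec i)$j) * (unit_vec i $ j)" for s
    have "G' 0 = 0 \<and> c i \<le> 0"
    proof (rule max2[OF r(1)])
      fix s :: real assume s: "\<bar>s\<bar> < r"
      have h1: "has_pd i u1 (x + s *\<^sub>R unit_vec i)" "has_pd i u2 (x + s *\<^sub>R unit_vec i)"
        using C1 C2 line[OF s] by (auto simp: C2_on_def)
      show "(G has_real_derivative G' s) (at s)"
        unfolding G_def G'_def comp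
        by (rule derivative_eq_intros pd_deriv_shift[OF h1(1)] pd_deriv_shift[OF h1(2)] | simp)+
    next
      have h2: "has_pd i (pd i u1) x" "has_pd i (pd i u2) x"
        using C1 C2 x by (auto simp: C2_on_def)
      show "(G' has_real_derivative c i) (at 0)"
        unfolding G'_def comp c_def
        using pd_deriv[OF h2(1)] pd_deriv[OF h2(2)]
        by (auto intro!: derivative_eq_intros)
    next
      fix s :: real assume s: "\<bar>s\<bar> < r"
      show "G s \<le> G 0" using bspec[OF mx line[OF s]] by (simp add: G_def)
    qed
    thus ?thesis by (simp add: G'_def)
  qed
  have e1: "(\<Sum>i\<in>UNIV. pd i (pd i u1) x) + (\<Sum>k\<in>K. (2 * \<alpha> k / x $ k) * pd k u1 x) = 0"
    using s1 x by (auto simp: regular_solution_def)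
  have e2: "(\<Sum>i\<in>UNIV. pd i (pd i u2) x) + (\<Sum>k\<in>K. (2 * \<alpha> k / x $ k) * pd k u2 x) = 0"
    using s2 x by (auto simp: regular_solution_def)
  have sc: "(\<Sum>i\<in>UNIV. c i) \<le> 0" using key by (simp add: sum_nonpos)
  have "(\<Sum>i\<in>UNIV. c i) = (\<Sum>i\<in>UNIV. pd i (pd i u1) x) - (\<Sum>i\<in>UNIV. pd i (pd i u2) x)
      + \<epsilon> * 2 * (\<Sum>i\<in>UNIV. (unit_vec i $ j) * (unit_vec i $ j))"
    by (simp add: c_def sum.distrib sum_subtractf sum_distrib_left mult.assoc)
  also have "(\<Sum>i\<in>UNIV. (unit_vec i $ j) * (unit_vec i $ j)) = 1"
    by (simp add: unit_vec_nth if_distrib cong: if_cong)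
  finally have sc2: "(\<Sum>i\<in>UNIV. c i) = - (\<Sum>k\<in>K. (2 * \<alpha> k / x $ k) * (pd k u1 x - pd k u2 x)) + \<epsilon> * 2"
    using e1 e2 by (simp add: right_diff_distrib sum_subtractf)
  have "(\<Sum>k\<in>K. (2 * \<alpha> k / x $ k) * (pd k u1 x - pd k u2 x)) \<le> 0"
  proof (rule sum_nonpos)
    fix k assume k: "k \<in> K"
    have xk: "x $ k > 0" using orth x k by (auto simp: orthant_def)
    have "pd k u1 x - pd k u2 x = - (\<epsilon> * 2 * (x$j) * (unit_vec k $ j))" using key[of k] by linarith
    moreover have "\<epsilon> * 2 * (x$j) * (unit_vec k $ j) \<ge> 0"
      using ep xk by (auto simp: unit_vec_nth)
    moreover have "2 * \<alpha> k / x $ k > 0" using al k xk by simp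
    ultimately have "0 \<le> (2 * \<alpha> k / x $ k) * (\<epsilon> * 2 * (x$j) * (unit_vec k $ j))"
      "pd k u1 x - pd k u2 x = - (\<epsilon> * 2 * (x$j) * (unit_vec k $ j))"
      by (metis less_imp_le mult_nonneg_nonneg)+
    then show "(2 * \<alpha> k / x $ k) * (pd k u1 x - pd k u2 x) \<le> 0"
      by (simp only: mult_minus_right)
  qed
  with sc sc2 ep show False by linarith
qed

lemma max_le:
  fixes u1 u2 :: "real^'m::finite \<Rightarrow> real"
  assumes op: "open \<Omega>" and bd: "bounded \<Omega>" and ne: "\<Omega> \<noteq> {}"
    and orth: "\<Omega> \<subseteq> orthant K" and al: "\<forall>k\<in>K. \<alpha> k > 0"
    and s1: "regular_solution K \<alpha> \<Omega> u1" and s2: "regular_solution K \<alpha> \<Omega> u2"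
    and c1: "continuous_on (closure \<Omega>) u1" and c2: "continuous_on (closure \<Omega>) u2"
    and fr: "\<forall>x\<in>frontier \<Omega>. u1 x = u2 x"
  shows "\<forall>y\<in>closure \<Omega>. u1 y \<le> u2 y"
proof
  fix y assume y: "y \<in> closure \<Omega>"
  obtain j :: 'm where True by blast
  obtain R where R: "\<forall>z\<in>closure \<Omega>. norm z \<le> R"
    using bd bounded_closure bounded_iff by blast
  define B where "B = R^2"
  have B: "(z$j)^2 \<le> B" if "z \<in> closure \<Omega>" for z
  proof -
    have "\<bar>z$j\<bar> \<le> R" using R that component_le_norm_cart[of z j] by fastforce
    hence "\<bar>z$j\<bar>^2 \<le> R^2" by (meson abs_ge_zero power_mono)
    thus ?thesis by (simp add: B_def)
  qed
  have eps: "u1 y - u2 y \<le> \<epsilon> * B" if ep: "\<epsilon> > 0" for \<epsilon>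
  proof -
    define v where "v z = u1 z - u2 z + \<epsilon> * (z$j)^2" for z
    have cv: "continuous_on (closure \<Omega>) v" unfolding v_def
      by (intro continuous_intros c1 c2)
    have cpt: "compact (closure \<Omega>)" using bd by (simp add: compact_closure)
    obtain x where x: "x \<in> closure \<Omega>" "\<forall>z\<in>closure \<Omega>. v z \<le> v x"
      using continuous_attains_sup[OF cpt _ cv] ne by auto
    have "x \<notin> \<Omega>"
    proof
      assume xi: "x \<in> \<Omega>"
      show False
        by (rule no_int_max[OF op orth al s1 s2 ep xi, of j])
           (use x closure_subset in \<open>auto simp: v_def\<close>)
    qed
    hence "x \<in> frontier \<Omega>" using x op by (simp add: frontier_def interior_open)
    hence "v x = \<epsilon> * (x$j)^2" using fr by (simp add: v_def)
    also have "\<dots> \<le> \<epsilon> * B" using B[OF x(1)] ep by simp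
    finally have "v y \<le> \<epsilon> * B" using x(2) y by fastforce
    moreover have "\<epsilon> * (y$j)^2 \<ge> 0" using ep by simp
    ultimately show ?thesis by (simp add: v_def)
  qed
  have B0: "B \<ge> 0" by (simp add: B_def)
  show "u1 y \<le> u2 y"
  proof (rule ccontr)
    assume "\<not> u1 y \<le> u2 y"
    hence d: "u1 y - u2 y > 0" by simp
    define \<epsilon> where "\<epsilon> = (u1 y - u2 y) / (2 * (B + 1))"
    have ep: "\<epsilon> > 0" using d B0 by (simp add: \<epsilon>_def)
    have "\<epsilon> * B < u1 y - u2 y"
    proof -
      have "\<epsilon> * B \<le> \<epsilon> * (B + 1)" using ep by simp
      also have "\<dots> = (u1 y - u2 y) / 2" using B0 by (simp add: \<epsilon>_def field_simps)
      finally show ?thesis using d by simp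
    qed
    with eps[OF ep] show False by simp
  qed
qed

theorem theorem5:
  fixes K :: "'m::finite set" and \<alpha> :: "'m \<Rightarrow> real"
    and \<Omega> \<Gamma> :: "(real^'m) set" and \<Gamma>k :: "'m \<Rightarrow> (real^'m) set"
    and \<phi> :: "real^'m \<Rightarrow> real" and \<tau> :: "'m \<Rightarrow> real^'m \<Rightarrow> real"
    and u1 u2 :: "real^'m \<Rightarrow> real"
  assumes m: "CARD('m) > 2"
    and K: "K \<noteq> {}"
    and alpha: "\<forall>k\<in>K. 0 < 2 * \<alpha> k \<and> 2 * \<alpha> k < 1"
    and dom: "open \<Omega>" "connected \<Omega>" "\<Omega> \<noteq> {}" "bounded \<Omega>" "\<Omega> \<subseteq> orthant K"
    and Gamma: "\<Gamma> = frontier \<Omega> \<inter> orthant K"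
    and Gammak: "\<forall>k\<in>K. \<Gamma>k k = frontier \<Omega> \<inter> {x. x $ k = 0}"
    and bdry: "frontier \<Omega> \<subseteq> closure \<Gamma> \<union> (\<Union>k\<in>K. \<Gamma>k k)"
    and lyap: "lyapunov_surface K \<Gamma>"
    and phi: "continuous_on (closure \<Gamma>) \<phi>"
    and tau: "\<forall>k\<in>K. continuous_on (closure (\<Gamma>k k)) (\<tau> k)"
    and match: "\<forall>k\<in>K. \<forall>x\<in>closure \<Gamma> \<inter> closure (\<Gamma>k k). \<phi> x = \<tau> k x"
    and sol1: "regular_solution K \<alpha> \<Omega> u1" "continuous_on (closure \<Omega>) u1"
    and sol2: "regular_solution K \<alpha> \<Omega> u2" "continuous_on (closure \<Omega>) u2"
    and bc1: "\<forall>x\<in>closure \<Gamma>. u1 x = \<phi> x" "\<forall>k\<in>K. \<forall>x\<in>closure (\<Gamma>k k). u1 x = \<tau> k x"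
    and bc2: "\<forall>x\<in>closure \<Gamma>. u2 x = \<phi> x" "\<forall>k\<in>K. \<forall>x\<in>closure (\<Gamma>k k). u2 x = \<tau> k x"
  shows "\<forall>x\<in>closure \<Omega>. u1 x = u2 x"
proof -
  have al: "\<forall>k\<in>K. \<alpha> k > 0" using alpha by auto
  have fr: "\<forall>x\<in>frontier \<Omega>. u1 x = u2 x"
  proof
    fix x assume x: "x \<in> frontier \<Omega>"
    then consider "x \<in> closure \<Gamma>" | k where "k \<in> K" "x \<in> \<Gamma>k k" using bdry by blast
    then show "u1 x = u2 x"
    proof cases
      case 1 then show ?thesis using bc1 bc2 by simp
    next
      case 2
      hence "x \<in> closure (\<Gamma>k k)" using closure_subset by blast
      then show ?thesis using bc1 bc2 2 by simp
    qed
  qed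
  have fr': "\<forall>x\<in>frontier \<Omega>. u2 x = u1 x" using fr by simp
  have "\<forall>y\<in>closure \<Omega>. u1 y \<le> u2 y"
    by (rule max_le[OF dom(1) dom(4) dom(3) dom(5) al sol1(1) sol2(1) sol1(2) sol2(2) fr])
  moreover have "\<forall>y\<in>closure \<Omega>. u2 y \<le> u1 y"
    by (rule max_le[OF dom(1) dom(4) dom(3) dom(5) al sol2(1) sol1(1) sol2(2) sol1(2) fr'])
  ultimately show ?thesis by (meson order_antisym)
qed

end
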